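(* Let $\mathcal{X},\mathcal{Y}$ be Banach spaces, $\mathcal{A}:\mathcal{X}\to\mathcal{Y}$ a bounded linear operator, $\mathcal{R}:\mathcal{X}\to[0,\infty)$ and $\mathcal{D}:\mathcal{Y}\times\mathcal{Y}\to[0,\infty)$, and for $\alpha>0$, $y\in\mathcal{Y}$ let $\mathcal{J}_{\alpha,y}(x)=\alpha\mathcal{R}(x)+\mathcal{D}(\mathcal{A}x,y)$. Assume: (1) $\mathcal{X}$ is reflexive; (2) $\mathcal{R}$ is weakly sequentially lower semicontinuous; (3) $\mathcal{R}=R_{wc}+R_{sc}$, where $R_{wc}:\mathcal{X}\to[0,\infty)$ is $\gamma$-weakly convex, $R_{sc}$ is $\mu$-strongly convex, and either (a) $\gamma\le\mu$, or (b) $\mu<\gamma<2\mu$ and $R_{sc}-\frac{\mu}{2}\|\cdot\|_{\mathcal{X}}^2$ is weakly sequentially lower semicontinuous; (4) $\mathcal{D}$ is weakly sequentially lower semicontinuous, convex in its first argument, continuous in its second argument, and $\mathcal{D}(y_1,y_2)=0$ if and only if $y_1=y_2$; (5) there exist $C>0$ and $p\ge1$ such that for all $y_1,y_2,y_3\in\mathcal{Y}$, $\mathcal{D}(y_1,y_2)\le C(\mathcal{D}(y_1,y_3)+\|y_2-y_3\|_{\mathcal{Y}}^p)$. Then for all $\alpha>0$ and $y^\delta\in\mathcal{Y}$, the set of critical points of $\mathcal{J}_{\alpha,y^\delta}$ is non-empty.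
   Context: A function $f$ is $\rho$-convex if $f-\frac{\rho}{2}\|\cdot\|^2$ is convex; $\mu$-strongly convex means $\mu$-convex with $\mu>0$; $\gamma$-weakly convex ($\gamma\ge0$) means $f+\frac{\gamma}{2}\|\cdot\|^2$ is convex. The (Fréchet) subdifferential of $f:\mathcal{X}\to\mathbb{R}\cup\{\infty\}$ at $x$ with $f(x)<\infty$ is $\partial f(x)=\{\psi\in\mathcal{X}^*: f(x')\ge f(x)+\psi(x'-x)+o(\|x'-x\|)\text{ as }x'\to x\}$ (empty if $f(x)=\infty$); a critical point is a point $x$ with $0\in\partial f(x)$. *)

theory Defs
  imports "HOL-Analysis.Analysis"
begin

definition weakly_convergent_to :: "(nat \<Rightarrow> 'a::real_normed_vector) \<Rightarrow> 'a \<Rightarrow> bool" where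
  "weakly_convergent_to xs x \<longleftrightarrow>
     (\<forall>f :: 'a \<Rightarrow>\<^sub>L real. (\<lambda>n. blinfun_apply f (xs n)) \<longlonglongrightarrow> blinfun_apply f x)"

definition weakly_seq_lsc :: "('a::real_normed_vector \<Rightarrow> real) \<Rightarrow> bool" where
  "weakly_seq_lsc f \<longleftrightarrow>
     (\<forall>xs x. weakly_convergent_to xs x \<longrightarrow>
        ereal (f x) \<le> liminf (\<lambda>n. ereal (f (xs n))))"

definition reflexive_space :: "'a::real_normed_vector itself \<Rightarrow> bool" where
  "reflexive_space _ \<longleftrightarrow>
     (\<forall>\<Phi> :: ('a \<Rightarrow>\<^sub>L real) \<Rightarrow>\<^sub>L real. \<exists>x::'a.
        \<forall>f. blinfun_apply \<Phi> f = blinfun_apply f x)"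

definition rho_convex :: "real \<Rightarrow> ('a::real_normed_vector \<Rightarrow> real) \<Rightarrow> bool" where
  "rho_convex \<rho> f \<longleftrightarrow> convex_on UNIV (\<lambda>x. f x - \<rho> / 2 * (norm x)\<^sup>2)"

definition strongly_convex :: "real \<Rightarrow> ('a::real_normed_vector \<Rightarrow> real) \<Rightarrow> bool" where
  "strongly_convex \<mu> f \<longleftrightarrow> \<mu> > 0 \<and> rho_convex \<mu> f"

definition weakly_convex :: "real \<Rightarrow> ('a::real_normed_vector \<Rightarrow> real) \<Rightarrow> bool" where
  "weakly_convex \<gamma> f \<longleftrightarrow> \<gamma> \<ge> 0 \<and> convex_on UNIV (\<lambda>x. f x + \<gamma> / 2 * (norm x)\<^sup>2)"

definition frechet_subdiff :: "('a::real_normed_vector \<Rightarrow> real) \<Rightarrow> 'a \<Rightarrow> ('a \<Rightarrow>\<^sub>L real) set" where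
  "frechet_subdiff f x = {\<psi>. \<forall>\<epsilon>>0. \<forall>\<^sub>F x' in at x.
       f x' \<ge> f x + blinfun_apply \<psi> (x' - x) - \<epsilon> * norm (x' - x)}"

definition critical_point :: "('a::real_normed_vector \<Rightarrow> real) \<Rightarrow> 'a \<Rightarrow> bool" where
  "critical_point f x \<longleftrightarrow> 0 \<in> frechet_subdiff f x"

end

theory Submission
  imports Defs "HOL-Library.Diagonal_Subsequence"
begin



definition gok :: "('a::real_vector \<Rightarrow> real) \<Rightarrow> ('a \<times> real) set \<Rightarrow> bool" where
  "gok p G \<longleftrightarrow> (0,0) \<in> G \<and> (\<forall>x a b. (x,a) \<in> G \<longrightarrow> (x,b) \<in> G \<longrightarrow> a = b) \<and>
     (\<forall>x a y b. (x,a) \<in> G \<longrightarrow> (y,b) \<in> G \<longrightarrow> (x+y, a+b) \<in> G) \<and>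
     (\<forall>x a c. (x,a) \<in> G \<longrightarrow> (c *\<^sub>R x, c*a) \<in> G) \<and>
     (\<forall>x a. (x,a) \<in> G \<longrightarrow> a \<le> p x)"

lemma gok_ext:
  fixes p :: "'a::real_vector \<Rightarrow> real"
  assumes subl: "\<And>x y. p (x+y) \<le> p x + p y" and hom: "\<And>c x. c \<ge> 0 \<Longrightarrow> p (c *\<^sub>R x) = c * p x"
    and G: "gok p G" and z: "\<forall>a. (z,a) \<notin> G"
  shows "\<exists>G'. gok p G' \<and> G \<subseteq> G' \<and> G' \<noteq> G"
proof -
  from G have G0: "(0,0) \<in> G" and Gf: "\<And>x a b. (x,a) \<in> G \<Longrightarrow> (x,b) \<in> G \<Longrightarrow> a = b"
    and Ga: "\<And>x a y b. (x,a) \<in> G \<Longrightarrow> (y,b) \<in> G \<Longrightarrow> (x+y, a+b) \<in> G"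
    and Gs: "\<And>x a c. (x,a) \<in> G \<Longrightarrow> (c *\<^sub>R x, c*a) \<in> G"
    and Gp: "\<And>x a. (x,a) \<in> G \<Longrightarrow> a \<le> p x"
    unfolding gok_def by blast+
  define S where "S = {b - p (y - z) |y b. (y,b) \<in> G}"
  define c where "c = Sup S"
  have key: "b - p (y - z) \<le> p (x + z) - a" if "(x,a) \<in> G" "(y,b) \<in> G" for x a y b
  proof -
    have "a + b \<le> p (x + y)" using Gp[OF Ga[OF that]] .
    also have "\<dots> = p ((x + z) + (y - z))" by (simp add: algebra_simps)
    also have "\<dots> \<le> p (x+z) + p (y - z)" by (rule subl)
    finally show ?thesis by simp
  qed
  have Sne: "S \<noteq> {}" using G0 unfolding S_def by blast
  have cle: "c \<le> p (x + z) - a" if "(x,a) \<in> G" for x a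
    unfolding c_def using Sne key[OF that] by (auto simp: S_def intro!: cSup_least)
  have bdd: "bdd_above S" unfolding S_def bdd_above_def using key[OF G0] by force
  have cge: "b - p (y - z) \<le> c" if "(y,b) \<in> G" for y b
    unfolding c_def using that bdd by (auto simp: S_def intro!: cSup_upper)
  define G' where "G' = {(x + t *\<^sub>R z, a + t*c) |x a t. (x,a) \<in> G}"
  have "gok p G'"
    unfolding gok_def
  proof (intro conjI allI impI)
    show "(0,0) \<in> G'" unfolding G'_def using G0 by force
  next
    fix w u v assume "(w,u) \<in> G'" "(w,v) \<in> G'"
    then obtain x a t x' a' t' where 1: "(x,a) \<in> G" "w = x + t *\<^sub>R z" "u = a + t*c"
      and 2: "(x',a') \<in> G" "w = x' + t' *\<^sub>R z" "v = a' + t'*c" unfolding G'_def by blast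
    have "t = t'"
    proof (rule ccontr)
      assume ne: "t \<noteq> t'"
      have "(x' + (-1) *\<^sub>R x, a' + (-1)*a) \<in> G" using Ga[OF 2(1) Gs[OF 1(1)]] .
      from Gs[OF this, of "1/(t-t')"]
      have "((1/(t-t')) *\<^sub>R (x' - x), (1/(t-t'))*(a'-a)) \<in> G" by simp
      moreover have "(1/(t-t')) *\<^sub>R (x' - x) = z"
      proof -
        have "x' - x = (t - t') *\<^sub>R z" using 1(2) 2(2) by (simp add: algebra_simps)
        then show ?thesis using ne by simp
      qed
      ultimately show False using z by metis
    qed
    then have "x = x'" using 1(2) 2(2) by simp
    then show "u = v" using 1 2 Gf \<open>t = t'\<close> by blast
  next
    fix w u w' u' assume "(w,u) \<in> G'" "(w',u') \<in> G'"
    then obtain x a t x' a' t' where 1: "(x,a) \<in> G" "w = x + t *\<^sub>R z" "u = a + t*c"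
      and 2: "(x',a') \<in> G" "w' = x' + t' *\<^sub>R z" "u' = a' + t'*c" unfolding G'_def by blast
    have "(w+w', u+u') = ((x+x') + (t+t') *\<^sub>R z, (a+a') + (t+t')*c)"
      using 1 2 by (simp add: algebra_simps)
    then show "(w+w', u+u') \<in> G'" unfolding G'_def
      using Ga[OF 1(1) 2(1)] by blast
  next
    fix w u s assume "(w,u) \<in> G'"
    then obtain x a t where 1: "(x,a) \<in> G" "w = x + t *\<^sub>R z" "u = a + t*c" unfolding G'_def by blast
    have "(s *\<^sub>R w, s*u) = (s *\<^sub>R x + (s*t) *\<^sub>R z, s*a + (s*t)*c)"
      using 1 by (simp add: algebra_simps)
    then show "(s *\<^sub>R w, s*u) \<in> G'" unfolding G'_def
      using Gs[OF 1(1), of s] by blast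
  next
    fix w u assume "(w,u) \<in> G'"
    then obtain x a t where 1: "(x,a) \<in> G" "w = x + t *\<^sub>R z" "u = a + t*c" unfolding G'_def by blast
    consider "t > 0" | "t = 0" | "t < 0" by linarith
    then show "u \<le> p w"
    proof cases
      case 1
      have "c \<le> p ((1/t) *\<^sub>R x + z) - (1/t)*a" using cle[OF Gs[OF \<open>(x,a)\<in>G\<close>]] .
      then have "t * c \<le> t * (p ((1/t) *\<^sub>R x + z) - (1/t)*a)" using 1
        by (simp add: mult_left_mono)
      then have "t * c \<le> t * p ((1/t) *\<^sub>R x + z) - a" using 1
        by (simp add: right_diff_distrib)
      also have "t * p ((1/t) *\<^sub>R x + z) = p (t *\<^sub>R ((1/t) *\<^sub>R x + z))" using hom 1 by simp
      also have "t *\<^sub>R ((1/t) *\<^sub>R x + z) = x + t *\<^sub>R z" using 1 by (simp add: algebra_simps)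
      finally show ?thesis using \<open>w = _\<close> \<open>u = _\<close> by simp
    next
      case 2 then show ?thesis using \<open>w = _\<close> \<open>u = _\<close> Gp[OF \<open>(x,a)\<in>G\<close>] by simp
    next
      case 3
      define s where "s = -t"
      have s: "s > 0" using 3 s_def by simp
      have "(1/s)*a - p ((1/s) *\<^sub>R x - z) \<le> c" using cge[OF Gs[OF \<open>(x,a)\<in>G\<close>]] .
      then have "s * ((1/s)*a - p ((1/s) *\<^sub>R x - z)) \<le> s * c" using s
        by (simp add: mult_left_mono)
      then have "a - s * p ((1/s) *\<^sub>R x - z) \<le> s * c" using s
        by (simp add: right_diff_distrib)
      also have "s * p ((1/s) *\<^sub>R x - z) = p (s *\<^sub>R ((1/s) *\<^sub>R x - z))" using hom s by simp
      also have "s *\<^sub>R ((1/s) *\<^sub>R x - z) = x + t *\<^sub>R z" using s by (simp add: algebra_simps s_def)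
      finally show ?thesis using \<open>w = _\<close> \<open>u = _\<close> s_def by simp
    qed
  qed
  moreover have "G \<subseteq> G'" unfolding G'_def by force
  moreover have "(z, c) \<in> G'" unfolding G'_def using G0 by force
  ultimately show ?thesis using z by blast
qed

lemma gokD:
  assumes "gok p G"
  shows "(0,0) \<in> G" "\<And>x a b. (x,a) \<in> G \<Longrightarrow> (x,b) \<in> G \<Longrightarrow> a = b"
    "\<And>x a y b. (x,a) \<in> G \<Longrightarrow> (y,b) \<in> G \<Longrightarrow> (x+y, a+b) \<in> G"
    "\<And>x a c. (x,a) \<in> G \<Longrightarrow> (c *\<^sub>R x, c*a) \<in> G"
    "\<And>x a. (x,a) \<in> G \<Longrightarrow> a \<le> p x"
  using assms unfolding gok_def by blast+

lemma gok_chain: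
  assumes C: "C \<in> chains {G. gok p G \<and> G0 \<subseteq> G}" and ne: "C \<noteq> {}"
  shows "gok p (\<Union>C) \<and> G0 \<subseteq> \<Union>C"
proof -
  have ok: "\<And>G. G \<in> C \<Longrightarrow> gok p G \<and> G0 \<subseteq> G" using C unfolding chains_def by blast
  have ch: "\<And>G H. G \<in> C \<Longrightarrow> H \<in> C \<Longrightarrow> G \<subseteq> H \<or> H \<subseteq> G"
    using C unfolding chains_def chain_subset_def by blast
  have two: "\<exists>K\<in>C. u \<in> K \<and> v \<in> K" if "u \<in> \<Union>C" "v \<in> \<Union>C" for u v
    using that ch by blast
  from ne obtain G1 where "G1 \<in> C" by blast
  show ?thesis
    unfolding gok_def
  proof (intro conjI allI impI)
    show "(0,0) \<in> \<Union>C" using gokD(1) ok[OF \<open>G1 \<in> C\<close>] \<open>G1 \<in> C\<close> by blast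
    show "G0 \<subseteq> \<Union>C" using ok[OF \<open>G1 \<in> C\<close>] \<open>G1 \<in> C\<close> by blast
  next
    fix x a b assume "(x,a) \<in> \<Union>C" "(x,b) \<in> \<Union>C"
    then obtain K where "K \<in> C" "(x,a) \<in> K" "(x,b) \<in> K" using two by blast
    then show "a = b" using gokD(2) ok[OF \<open>K \<in> C\<close>] by blast
  next
    fix x a y b assume "(x,a) \<in> \<Union>C" "(y,b) \<in> \<Union>C"
    then obtain K where "K \<in> C" "(x,a) \<in> K" "(y,b) \<in> K" using two by blast
    then show "(x+y,a+b) \<in> \<Union>C" using gokD(3) ok[OF \<open>K \<in> C\<close>] \<open>K \<in> C\<close> by blast
  next
    fix x a c assume "(x,a) \<in> \<Union>C"
    then obtain K where "K \<in> C" "(x,a) \<in> K" by blast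
    then show "(c *\<^sub>R x, c*a) \<in> \<Union>C" using gokD(4) ok[OF \<open>K \<in> C\<close>] \<open>K \<in> C\<close> by blast
  next
    fix x a assume "(x,a) \<in> \<Union>C"
    then obtain K where "K \<in> C" "(x,a) \<in> K" by blast
    then show "a \<le> p x" using gokD(5) ok[OF \<open>K \<in> C\<close>] by blast
  qed
qed

lemma HB_graph:
  fixes p :: "'a::real_vector \<Rightarrow> real"
  assumes subl: "\<And>x y. p (x+y) \<le> p x + p y" and hom: "\<And>c x. c \<ge> 0 \<Longrightarrow> p (c *\<^sub>R x) = c * p x"
    and G0: "gok p G0"
  shows "\<exists>F. linear F \<and> (\<forall>x. F x \<le> p x) \<and> (\<forall>x a. (x,a) \<in> G0 \<longrightarrow> F x = a)"
proof -
  define A where "A = {G. gok p G \<and> G0 \<subseteq> G}"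
  have "\<forall>C\<in>chains A. \<exists>U\<in>A. \<forall>X\<in>C. X \<subseteq> U"
  proof
    fix C assume C: "C \<in> chains A"
    show "\<exists>U\<in>A. \<forall>X\<in>C. X \<subseteq> U"
    proof (cases "C = {}")
      case True then show ?thesis using G0 unfolding A_def by blast
    next
      case False then show ?thesis using gok_chain[OF C[unfolded A_def] False] unfolding A_def by blast
    qed
  qed
  from Zorn_Lemma2[OF this] obtain G where G: "G \<in> A" and max: "\<And>X. X \<in> A \<Longrightarrow> G \<subseteq> X \<Longrightarrow> X = G"
    by blast
  have Gok: "gok p G" and G0G: "G0 \<subseteq> G" using G unfolding A_def by auto
  have tot: "\<exists>a. (x,a) \<in> G" for x
  proof (rule ccontr)
    assume "\<nexists>a. (x, a) \<in> G"
    from gok_ext[OF subl hom Gok, of x] this obtain G' where "gok p G'" "G \<subseteq> G'" "G' \<noteq> G" by blast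
    then show False using max[of G'] G0G unfolding A_def by blast
  qed
  note Gf = gokD(2)[OF Gok] and Ga = gokD(3)[OF Gok] and Gs = gokD(4)[OF Gok] and Gp = gokD(5)[OF Gok]
  define F where "F x = (THE a. (x,a) \<in> G)" for x
  have FG: "(x, F x) \<in> G" for x
    unfolding F_def using tot[of x] Gf by (metis theI)
  have Feq: "(x,a) \<in> G \<Longrightarrow> F x = a" for x a using FG Gf by blast
  have "linear F"
  proof (rule linearI)
    fix x y show "F (x+y) = F x + F y" using Feq[OF Ga[OF FG FG]] .
  next
    fix c x show "F (c *\<^sub>R x) = c *\<^sub>R F x" using Feq[OF Gs[OF FG]] by simp
  qed
  moreover have "\<forall>x. F x \<le> p x" using Gp FG by blast
  moreover have "\<forall>x a. (x,a) \<in> G0 \<longrightarrow> F x = a" using Feq G0G by blast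
  ultimately show ?thesis by blast
qed




lemma HB_cor:
  fixes p :: "'a::real_vector \<Rightarrow> real"
  assumes subl: "\<And>x y. p (x+y) \<le> p x + p y" and hom: "\<And>c x. c \<ge> 0 \<Longrightarrow> p (c *\<^sub>R x) = c * p x"
    and T: "subspace T" and cond: "\<And>y t. y \<in> T \<Longrightarrow> t * d \<le> p (y + t *\<^sub>R z)"
  shows "\<exists>F. linear F \<and> (\<forall>x. F x \<le> p x) \<and> (\<forall>y\<in>T. F y = 0) \<and> F z = d"
proof -
  have p0: "p 0 = 0" using hom[of 0 0] by simp
  define G0 where "G0 = {(y + t *\<^sub>R z, t*d) |y t. y \<in> T}"
  have "gok p G0"
    unfolding gok_def
  proof (intro conjI allI impI)
    show "(0,0) \<in> G0" unfolding G0_def using subspace_0[OF T] by force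
  next
    fix w u v assume "(w,u) \<in> G0" "(w,v) \<in> G0"
    then obtain y t y' t' where 1: "y \<in> T" "w = y + t *\<^sub>R z" "u = t*d"
      and 2: "y' \<in> T" "w = y' + t' *\<^sub>R z" "v = t'*d" unfolding G0_def by blast
    show "u = v"
    proof (cases "t = t'")
      case True then show ?thesis using 1 2 by simp
    next
      case False
      have "y' - y = (t - t') *\<^sub>R z" using 1(2) 2(2) by (simp add: algebra_simps)
      then have "z = (1/(t-t')) *\<^sub>R (y' - y)" using False by simp
      then have zT: "z \<in> T" using T 1(1) 2(1) by (simp add: subspace_diff subspace_scale)
      have "1 * d \<le> p (-z + 1 *\<^sub>R z)" using cond[of "-z" 1] zT T by (simp add: subspace_neg)
      moreover have "(-1) * d \<le> p (z + (-1) *\<^sub>R z)" using cond[of z "-1"] zT by simp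
      ultimately have "d = 0" using p0 by simp
      then show ?thesis using 1 2 by simp
    qed
  next
    fix w u w' u' assume "(w,u) \<in> G0" "(w',u') \<in> G0"
    then obtain y t y' t' where 1: "y \<in> T" "w = y + t *\<^sub>R z" "u = t*d"
      and 2: "y' \<in> T" "w' = y' + t' *\<^sub>R z" "u' = t'*d" unfolding G0_def by blast
    have "(w+w', u+u') = ((y+y') + (t+t') *\<^sub>R z, (t+t')*d)" using 1 2 by (simp add: algebra_simps)
    then show "(w+w', u+u') \<in> G0" unfolding G0_def using subspace_add[OF T 1(1) 2(1)] by blast
  next
    fix w u c assume "(w,u) \<in> G0"
    then obtain y t where 1: "y \<in> T" "w = y + t *\<^sub>R z" "u = t*d" unfolding G0_def by blast
    have "(c *\<^sub>R w, c*u) = (c *\<^sub>R y + (c*t) *\<^sub>R z, (c*t)*d)" using 1 by (simp add: algebra_simps)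
    then show "(c *\<^sub>R w, c*u) \<in> G0" unfolding G0_def using subspace_scale[OF T 1(1)] by blast
  next
    fix w u assume "(w,u) \<in> G0"
    then obtain y t where 1: "y \<in> T" "w = y + t *\<^sub>R z" "u = t*d" unfolding G0_def by blast
    then show "u \<le> p w" using cond[OF 1(1)] by simp
  qed
  from HB_graph[OF subl hom this] obtain F where F: "linear F" "\<forall>x. F x \<le> p x"
    "\<forall>x a. (x,a) \<in> G0 \<longrightarrow> F x = a" by blast
  have "\<forall>y\<in>T. F y = 0"
  proof
    fix y assume "y \<in> T"
    then have "(y + 0 *\<^sub>R z, 0*d) \<in> G0" unfolding G0_def by blast
    then show "F y = 0" using F(3) by simp
  qed
  moreover have "(0 + 1 *\<^sub>R z, 1*d) \<in> G0" unfolding G0_def using subspace_0[OF T] by blast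
  then have "F z = d" using F(3) by simp
  ultimately show ?thesis using F by blast
qed

lemma linear_bl:
  fixes F :: "'a::real_normed_vector \<Rightarrow> real"
  assumes "linear F" "\<And>x. F x \<le> K * norm x"
  shows "bounded_linear F"
proof (rule bounded_linear_intro)
  show "F (x+y) = F x + F y" for x y using linear_add[OF assms(1)] .
  show "F (r *\<^sub>R x) = r *\<^sub>R F x" for r x using linear_scale[OF assms(1)] by simp
  show "norm (F x) \<le> norm x * K" for x
  proof -
    have "F (-x) = - F x" using linear_neg[OF assms(1)] .
    then show ?thesis using assms(2)[of x] assms(2)[of "-x"] by (simp add: mult.commute)
  qed
qed

lemma HB_norm:
  fixes z :: "'a::real_normed_vector"
  assumes T: "subspace T" and cond: "\<And>y t. y \<in> T \<Longrightarrow> t * d \<le> norm (y + t *\<^sub>R z)"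
  shows "\<exists>f :: 'a \<Rightarrow>\<^sub>L real. (\<forall>y\<in>T. blinfun_apply f y = 0) \<and> blinfun_apply f z = d \<and>
     (\<forall>v. \<bar>blinfun_apply f v\<bar> \<le> norm v)"
proof -
  from HB_cor[of norm T d z] T cond obtain F where F: "linear F" "\<forall>x. F x \<le> norm x"
    "\<forall>y\<in>T. F y = 0" "F z = d"
    by (auto intro: norm_triangle_ineq)
  have bl: "bounded_linear F" using linear_bl[of F 1] F by simp
  have "\<bar>F v\<bar> \<le> norm v" for v using F(2) linear_neg[OF F(1), of v] by (metis abs_le_iff norm_minus_cancel)
  then show ?thesis using bounded_linear_Blinfun_apply[OF bl] F by (intro exI[of _ "Blinfun F"]) auto
qed




definition qn :: "(nat \<Rightarrow> 'a::real_normed_vector) \<Rightarrow> ('a \<Rightarrow>\<^sub>L real) \<Rightarrow> real" where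
  "qn xs h = (SUP n. \<bar>blinfun_apply h (xs n)\<bar>)"

lemma qn_bdd:
  fixes xs :: "nat \<Rightarrow> 'a::real_normed_vector" and h h1 h2 :: "'a \<Rightarrow>\<^sub>L real"
  assumes "\<forall>n. norm (xs n) \<le> B"
  shows "bdd_above (range (\<lambda>n. \<bar>blinfun_apply h (xs n)\<bar>))"
proof -
  have "\<bar>blinfun_apply h (xs n)\<bar> \<le> norm h * B" for n
    using order_trans[OF norm_blinfun[of h "xs n"] mult_left_mono[OF spec[OF assms, of n] norm_ge_zero]] by simp
  then show ?thesis by (intro bdd_aboveI[where M="norm h * B"]) auto
qed

lemma qn_ub:
  fixes xs :: "nat \<Rightarrow> 'a::real_normed_vector" and h h1 h2 :: "'a \<Rightarrow>\<^sub>L real"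
  assumes "\<forall>n. norm (xs n) \<le> B"
  shows "\<bar>blinfun_apply h (xs n)\<bar> \<le> qn xs h"
  unfolding qn_def using qn_bdd[OF assms, of h] by (intro cSUP_upper) auto

lemma qn_le:
  fixes xs :: "nat \<Rightarrow> 'a::real_normed_vector" and h h1 h2 :: "'a \<Rightarrow>\<^sub>L real"
  assumes "\<forall>n. norm (xs n) \<le> B"
  shows "qn xs h \<le> norm h * B"
  unfolding qn_def
proof (rule cSUP_least)
  fix n show "\<bar>blinfun_apply h (xs n)\<bar> \<le> norm h * B"
    using order_trans[OF norm_blinfun[of h "xs n"] mult_left_mono[OF spec[OF assms, of n] norm_ge_zero]] by simp
qed auto

lemma qn_least:
  fixes xs :: "nat \<Rightarrow> 'a::real_normed_vector" and h h1 h2 :: "'a \<Rightarrow>\<^sub>L real"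
  assumes "\<And>n. \<bar>blinfun_apply h (xs n)\<bar> \<le> c"
  shows "qn xs h \<le> c"
  unfolding qn_def using assms by (intro cSUP_least) auto

lemma qn_add:
  fixes xs :: "nat \<Rightarrow> 'a::real_normed_vector" and h h1 h2 :: "'a \<Rightarrow>\<^sub>L real"
  assumes "\<forall>n. norm (xs n) \<le> B"
  shows "qn xs (h1 + h2) \<le> qn xs h1 + qn xs h2"
proof (rule qn_least)
  fix n
  have "\<bar>blinfun_apply (h1 + h2) (xs n)\<bar> \<le> \<bar>blinfun_apply h1 (xs n)\<bar> + \<bar>blinfun_apply h2 (xs n)\<bar>"
    by (simp add: plus_blinfun.rep_eq)
  then show "\<bar>blinfun_apply (h1 + h2) (xs n)\<bar> \<le> qn xs h1 + qn xs h2"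
    using qn_ub[OF assms, of h1 n] qn_ub[OF assms, of h2 n] by linarith
qed

lemma qn_hom:
  fixes xs :: "nat \<Rightarrow> 'a::real_normed_vector" and h h1 h2 :: "'a \<Rightarrow>\<^sub>L real"
  assumes B: "\<forall>n. norm (xs n) \<le> B" and c: "c \<ge> 0"
  shows "qn xs (c *\<^sub>R h) = c * qn xs h"
proof (cases "c = 0")
  case True
  then show ?thesis unfolding qn_def by simp
next
  case False
  then have c: "c > 0" using c by simp
  have "qn xs (c *\<^sub>R h) \<le> c * qn xs h"
  proof (rule qn_least)
    fix n show "\<bar>blinfun_apply (c *\<^sub>R h) (xs n)\<bar> \<le> c * qn xs h"
      using mult_left_mono[OF qn_ub[OF B, of h n], of c] c by (simp add: abs_mult scaleR_blinfun.rep_eq)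
  qed
  moreover have "qn xs h \<le> qn xs (c *\<^sub>R h) / c"
  proof (rule qn_least)
    fix n
    have "c * \<bar>blinfun_apply h (xs n)\<bar> \<le> qn xs (c *\<^sub>R h)"
      using qn_ub[OF B, of "c *\<^sub>R h" n] c by (simp add: abs_mult scaleR_blinfun.rep_eq)
    then show "\<bar>blinfun_apply h (xs n)\<bar> \<le> qn xs (c *\<^sub>R h) / c" using c by (simp add: field_simps)
  qed
  then have "c * qn xs h \<le> qn xs (c *\<^sub>R h)" using c by (simp add: field_simps)
  ultimately show ?thesis by simp
qed

lemma qn_nonneg:
  fixes xs :: "nat \<Rightarrow> 'a::real_normed_vector" and h h1 h2 :: "'a \<Rightarrow>\<^sub>L real"
  assumes "\<forall>n. norm (xs n) \<le> B"
  shows "qn xs h \<ge> 0"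
  using qn_ub[OF assms, of h 0] by simp




definition QQ :: "(nat \<Rightarrow> 'a::real_vector) \<Rightarrow> 'a set" where
  "QQ xs = {\<Sum>i<N. of_rat (w i) *\<^sub>R xs i |N w. True}"

lemma sum_pad:
  "(N::nat) \<le> M \<Longrightarrow> (\<Sum>i<M. if i < N then f i else 0) = (\<Sum>i<N. f i)"
proof -
  assume "N \<le> M"
  have "(\<Sum>i<M. if i < N then f i else 0) = (\<Sum>i\<in>{..<M}. if i \<in> {..<N} then f i else 0)" by simp
  also have "\<dots> = sum f ({..<M} \<inter> {..<N})" by (rule sum.inter_restrict[symmetric]) simp
  also have "{..<M} \<inter> {..<N} = {..<N}" using \<open>N \<le> M\<close> by auto
  finally show ?thesis .
qed

lemma QQ_I: "v = (\<Sum>i<N. of_rat (w i) *\<^sub>R xs i) \<Longrightarrow> v \<in> QQ xs"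
  unfolding QQ_def by (intro CollectI exI[of _ N] exI[of _ w]) simp

lemma QQ_countable: "countable (QQ xs)"
proof -
  define lc where "lc l = (\<Sum>i<length l. of_rat (l!i) *\<^sub>R xs i)" for l :: "rat list"
  have "QQ xs \<subseteq> range lc"
  proof
    fix v assume "v \<in> QQ xs"
    then obtain N w where v: "v = (\<Sum>i<N. of_rat (w i) *\<^sub>R xs i)" unfolding QQ_def by blast
    have "lc (map w [0..<N]) = v" unfolding lc_def v by (intro sum.cong) auto
    then show "v \<in> range lc" by (metis rangeI)
  qed
  moreover have "countable (range lc)" by simp
  ultimately show ?thesis by (rule countable_subset)
qed

lemma QQ_add:
  assumes "a \<in> QQ xs" "b \<in> QQ xs" shows "a + b \<in> QQ xs"
proof -
  obtain N1 w1 where a: "a = (\<Sum>i<N1. of_rat (w1 i) *\<^sub>R xs i)" using assms(1) unfolding QQ_def by blast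
  obtain N2 w2 where b: "b = (\<Sum>i<N2. of_rat (w2 i) *\<^sub>R xs i)" using assms(2) unfolding QQ_def by blast
  define w where "w i = (if i < N1 then w1 i else 0) + (if i < N2 then w2 i else 0)" for i
  have "(\<Sum>i<N1+N2. of_rat (w i) *\<^sub>R xs i) =
      (\<Sum>i<N1+N2. if i < N1 then of_rat (w1 i) *\<^sub>R xs i else 0) + (\<Sum>i<N1+N2. if i < N2 then of_rat (w2 i) *\<^sub>R xs i else 0)"
  proof -
    have "of_rat (w i) *\<^sub>R xs i = (if i < N1 then of_rat (w1 i) *\<^sub>R xs i else 0) + (if i < N2 then of_rat (w2 i) *\<^sub>R xs i else 0)" for i
      unfolding w_def by (simp add: of_rat_add scaleR_add_left)
    then show ?thesis by (simp only: sum.distrib)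
  qed
  also have "\<dots> = a + b" unfolding a b by (simp add: sum_pad)
  finally show ?thesis by (intro QQ_I[where N="N1+N2" and w=w]) simp
qed

lemma QQ_scale:
  assumes "a \<in> QQ xs" shows "of_rat r *\<^sub>R a \<in> QQ xs"
proof -
  obtain N w where a: "a = (\<Sum>i<N. of_rat (w i) *\<^sub>R xs i)" using assms(1) unfolding QQ_def by blast
  have "of_rat r *\<^sub>R a = (\<Sum>i<N. of_rat (r * w i) *\<^sub>R xs i)"
    unfolding a by (simp add: scaleR_sum_right of_rat_mult)
  then show ?thesis by (rule QQ_I)
qed

lemma QQ_base: "xs j \<in> QQ xs"
proof -
  have "(\<Sum>i<Suc j. of_rat (if i = j then 1 else 0) *\<^sub>R xs i) = (\<Sum>i<Suc j. if i = j then xs i else 0)"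
    by (rule sum.cong) auto
  also have "\<dots> = xs j" by (subst sum.delta) auto
  finally have "(\<Sum>i<Suc j. of_rat (if i = j then 1 else 0) *\<^sub>R xs i) = xs j" .
  then show ?thesis by (intro QQ_I[where N="Suc j" and w="\<lambda>i. if i = j then 1 else 0"]) simp
qed

lemma QQ_zero: "0 \<in> QQ xs"
  by (rule QQ_I[where N=0]) simp

lemma QQ_dense:
  fixes xs :: "nat \<Rightarrow> 'a::real_normed_vector"
  assumes "y \<in> span (range xs)" "e > 0"
  shows "\<exists>m\<in>QQ xs. norm (y - m) < e"
proof -
  define P where "P = {y. \<forall>e>0. \<exists>m\<in>QQ xs. norm (y - m) < e}"
  have "subspace P"
    unfolding subspace_def
  proof (intro conjI ballI allI)
    show "0 \<in> P" unfolding P_def using QQ_zero by force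
  next
    fix a b assume "a \<in> P" "b \<in> P"
    show "a + b \<in> P" unfolding P_def
    proof (intro CollectI allI impI)
      fix e :: real assume "e > 0"
      then have e2: "e/2 > 0" by simp
      obtain m1 where "m1 \<in> QQ xs" "norm (a - m1) < e/2"
        using \<open>a \<in> P\<close> e2 unfolding P_def by blast
      moreover obtain m2 where "m2 \<in> QQ xs" "norm (b - m2) < e/2"
        using \<open>b \<in> P\<close> e2 unfolding P_def by blast
      moreover have "norm (a + b - (m1 + m2)) \<le> norm (a - m1) + norm (b - m2)"
        by (metis add_diff_add norm_triangle_ineq)
      ultimately show "\<exists>m\<in>QQ xs. norm (a + b - m) < e"
        by (intro bexI[of _ "m1+m2"] QQ_add) auto
    qed
  next
    fix c :: real and a assume "a \<in> P"
    show "c *\<^sub>R a \<in> P" unfolding P_def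
    proof (intro CollectI allI impI)
      fix e :: real assume "e > 0"
      then obtain m where m: "m \<in> QQ xs" "norm (a - m) < e / (2 * (\<bar>c\<bar> + 1))"
      proof -
        have "e / (2 * (\<bar>c\<bar> + 1)) > 0" using \<open>e > 0\<close> by (simp add: add_nonneg_pos)
        then show ?thesis using \<open>a \<in> P\<close> that unfolding P_def by blast
      qed
      have "e / (2 * (norm m + 1)) > 0" using \<open>e > 0\<close> by (simp add: add_nonneg_pos)
      then have "c - e / (2 * (norm m + 1)) < c + e / (2 * (norm m + 1))" by simp
      then obtain r where r: "r \<in> \<rat>" "c - e / (2 * (norm m + 1)) < r" "r < c + e / (2 * (norm m + 1))"
        using Rats_dense_in_real by blast
      then obtain r' where r': "r = of_rat r'" by (auto elim: Rats_cases)
      have "norm (c *\<^sub>R a - r *\<^sub>R m) = norm (c *\<^sub>R (a - m) + (c - r) *\<^sub>R m)"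
        by (simp add: algebra_simps)
      also have "\<dots> \<le> \<bar>c\<bar> * norm (a - m) + \<bar>c - r\<bar> * norm m"
        by (metis norm_scaleR norm_triangle_ineq)
      also have "\<bar>c\<bar> * norm (a - m) \<le> \<bar>c\<bar> * (e / (2 * (\<bar>c\<bar> + 1)))"
        using m(2) by (intro mult_left_mono) auto
      also have "\<bar>c\<bar> * (e / (2 * (\<bar>c\<bar> + 1))) \<le> e/2"
        using \<open>e > 0\<close> by (simp add: field_simps)
      also have "\<bar>c - r\<bar> * norm m \<le> e / (2 * (norm m + 1)) * norm m"
        using r by (intro mult_right_mono) auto
      also have "e / (2 * (norm m + 1)) * norm m < e/2"
      proof -
        have "norm m / (norm m + 1) < 1" by (simp add: add_nonneg_pos)
        then have "(e/2) * (norm m / (norm m + 1)) < (e/2) * 1"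
          using \<open>e > 0\<close> by (intro mult_strict_left_mono) auto
        then show ?thesis by simp
      qed
      finally show "\<exists>m\<in>QQ xs. norm (c *\<^sub>R a - m) < e"
        using QQ_scale[OF m(1), of r'] r' by (intro bexI[of _ "r *\<^sub>R m"]) auto
    qed
  qed
  moreover have "range xs \<subseteq> P"
  proof
    fix v assume "v \<in> range xs"
    then obtain j where "v = xs j" by blast
    then have "v \<in> QQ xs" "norm (v - v) = 0" using QQ_base[of xs j] by auto
    then show "v \<in> P" unfolding P_def by force
  qed
  ultimately have "span (range xs) \<subseteq> P" by (rule span_minimal[rotated])
  then show ?thesis using assms unfolding P_def by blast
qed




lemma qn_neg:
  fixes xs :: "nat \<Rightarrow> 'a::real_normed_vector" and h :: "'a \<Rightarrow>\<^sub>L real"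
  shows "qn xs (-h) = qn xs h"
  unfolding qn_def by (simp add: uminus_blinfun.rep_eq)

lemma weak_compact:
  fixes xs :: "nat \<Rightarrow> 'x::banach"
  assumes refl: "reflexive_space TYPE('x)" and B: "\<forall>n. norm (xs n) \<le> B"
  shows "\<exists>r x. strict_mono r \<and> weakly_convergent_to (xs \<circ> r) x"
proof -
  have "\<exists>f::'x \<Rightarrow>\<^sub>L real. (\<forall>v. \<bar>blinfun_apply f v\<bar> \<le> norm v) \<and> blinfun_apply f m = norm m" for m
  proof -
    have "t * norm m \<le> norm (y + t *\<^sub>R m)" if "y \<in> {0}" for y t
      using that by (simp add: mult_right_mono)
    from HB_norm[of "{0}" "norm m" m, OF subspace_single_0 this] show ?thesis by blast
  qed
  then have "\<forall>m. \<exists>f::'x \<Rightarrow>\<^sub>L real. (\<forall>v. \<bar>blinfun_apply f v\<bar> \<le> norm v) \<and> blinfun_apply f m = norm m" by blast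
  from choice[OF this] obtain fm :: "'x \<Rightarrow> ('x \<Rightarrow>\<^sub>L real)" where fm: "\<forall>m. (\<forall>v. \<bar>blinfun_apply (fm m) v\<bar> \<le> norm v) \<and> blinfun_apply (fm m) m = norm m"
    by blast
  then have fm1: "\<And>m v. \<bar>blinfun_apply (fm m) v\<bar> \<le> norm v"
    and fm2: "\<And>m. blinfun_apply (fm m) m = norm m" by auto
  define Fs where "Fs = fm ` QQ xs"
  have Fs_ne: "Fs \<noteq> {}" unfolding Fs_def using QQ_zero by blast
  have Fs_c: "countable Fs" unfolding Fs_def using QQ_countable by blast
  define e where "e = from_nat_into Fs"
  have range_e: "range e = Fs" unfolding e_def using Fs_ne Fs_c by simp
  have bnd: "\<bar>blinfun_apply h (xs k)\<bar> \<le> norm h * B" for h :: "'x \<Rightarrow>\<^sub>L real" and k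
    using order_trans[OF norm_blinfun[of h "xs k"] mult_left_mono[OF spec[OF B, of k] norm_ge_zero]] by simp
  interpret S: subseqs "\<lambda>j s. convergent (\<lambda>k. blinfun_apply (e j) (xs (s k)))"
  proof
    fix j and s :: "nat \<Rightarrow> nat" assume "strict_mono s"
    have "bounded (range (\<lambda>k. blinfun_apply (e j) (xs (s k))))"
      unfolding bounded_iff using bnd by (auto intro!: exI[of _ "norm (e j) * B"])
    from bounded_imp_convergent_subsequence[OF this] obtain l r where
      "strict_mono r" "((\<lambda>k. blinfun_apply (e j) (xs (s k))) \<circ> r) \<longlonglongrightarrow> l" by blast
    then show "\<exists>r'. strict_mono r' \<and> convergent (\<lambda>k. blinfun_apply (e j) (xs ((s \<circ> r') k)))"
      by (intro exI[of _ r]) (auto simp: o_def intro: convergentI)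
  qed
  define r where "r = S.diagseq"
  have r_mono: "strict_mono r" unfolding r_def by (rule S.subseq_diagseq)
  have conv_e: "convergent (\<lambda>k. blinfun_apply (e j) (xs (r k)))" for j
  proof -
    have "convergent (\<lambda>k. blinfun_apply (e j) (xs ((S.diagseq \<circ> (+) (Suc j)) k)))"
    proof (rule S.diagseq_holds)
      fix r' s n assume "strict_mono (r' :: nat \<Rightarrow> nat)" "convergent (\<lambda>k. blinfun_apply (e n) (xs (s k)))"
      from convergent_subseq_convergent[OF this(2) this(1)]
      show "convergent (\<lambda>k. blinfun_apply (e n) (xs ((s \<circ> r') k)))" by (simp add: o_def)
    qed
    then have "convergent (\<lambda>k. blinfun_apply (e j) (xs (r (k + Suc j))))"
      by (simp add: r_def o_def add.commute)
    then show ?thesis using convergent_ignore_initial_segment[of "\<lambda>k. blinfun_apply (e j) (xs (r k))" "Suc j"] by simp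
  qed
  define V where "V = {h :: 'x \<Rightarrow>\<^sub>L real. convergent (\<lambda>k. blinfun_apply h (xs (r k)))}"
  have V0: "convergent (\<lambda>k. blinfun_apply 0 (xs (r k)))" by (simp add: convergent_const)
  have Vadd: "convergent (\<lambda>k. blinfun_apply (a + b) (xs (r k)))"
    if "convergent (\<lambda>k. blinfun_apply a (xs (r k)))" "convergent (\<lambda>k. blinfun_apply b (xs (r k)))" for a b :: "'x \<Rightarrow>\<^sub>L real"
    using convergent_add[OF that] by (simp add: plus_blinfun.rep_eq)
  have Vscale: "convergent (\<lambda>k. blinfun_apply (c *\<^sub>R a) (xs (r k)))"
    if "convergent (\<lambda>k. blinfun_apply a (xs (r k)))" for a :: "'x \<Rightarrow>\<^sub>L real" and c :: real
  proof -
    from that obtain L where "(\<lambda>k. blinfun_apply a (xs (r k))) \<longlonglongrightarrow> L" unfolding convergent_def by blast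
    from tendsto_mult_left[OF this, of c] show ?thesis by (simp add: scaleR_blinfun.rep_eq convergentI)
  qed
  have "subspace V"
    unfolding subspace_def V_def using V0 Vadd Vscale by blast
  have "Fs \<subseteq> V" using conv_e range_e unfolding V_def by auto
  then have spanV: "span Fs \<subseteq> V" using \<open>subspace V\<close> by (rule span_minimal)
  have approx: "\<exists>h\<in>span Fs. qn xs (f - h) < \<epsilon>" if "\<epsilon> > 0" for f \<epsilon>
  proof (rule ccontr)
    assume "\<not> ?thesis"
    then have nf: "\<And>h. h \<in> span Fs \<Longrightarrow> \<epsilon> \<le> qn xs (f - h)" by force
    have cond: "t * \<epsilon> \<le> qn xs (y + t *\<^sub>R f)" if "y \<in> span Fs" for y t
    proof (cases "t > 0")
      case False
      then have "t * \<epsilon> \<le> 0" using \<open>\<epsilon> > 0\<close> by (simp add: mult_nonpos_nonneg)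
      then show ?thesis using qn_nonneg[OF B] by (meson order_trans)
    next
      case True
      have "y + t *\<^sub>R f = t *\<^sub>R (f - (-(1/t)) *\<^sub>R y)" using True by (simp add: algebra_simps)
      then have "qn xs (y + t *\<^sub>R f) = t * qn xs (f - (-(1/t)) *\<^sub>R y)" using qn_hom[OF B] True by simp
      moreover have "\<epsilon> \<le> qn xs (f - (-(1/t)) *\<^sub>R y)" using nf span_scale[OF that] by blast
      ultimately show ?thesis using True by simp
    qed
    from HB_cor[of "qn xs" "span Fs" \<epsilon> f, OF qn_add[OF B] qn_hom[OF B] subspace_span cond]
    obtain \<Psi> where \<Psi>: "linear \<Psi>" "\<forall>h. \<Psi> h \<le> qn xs h" "\<forall>y\<in>span Fs. \<Psi> y = 0" "\<Psi> f = \<epsilon>" by blast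
    have "bounded_linear \<Psi>"
    proof (rule linear_bl[of \<Psi> B])
      fix h show "\<Psi> h \<le> B * norm h" using \<Psi>(2) qn_le[OF B, of h] by (metis mult.commute order_trans)
    qed (rule \<Psi>(1))
    from refl[unfolded reflexive_space_def, rule_format, of "Blinfun \<Psi>"]
    obtain x where x: "\<And>h. \<Psi> h = blinfun_apply h x"
      using bounded_linear_Blinfun_apply[OF \<open>bounded_linear \<Psi>\<close>] by auto
    have absx: "\<bar>blinfun_apply h x\<bar> \<le> qn xs h" for h
    proof -
      have "blinfun_apply h x \<le> qn xs h" using \<Psi>(2) x by metis
      moreover have "- blinfun_apply h x \<le> qn xs h"
        using \<Psi>(2)[rule_format, of "-h"] x[of "-h"] by (simp add: uminus_blinfun.rep_eq qn_neg)
      ultimately show ?thesis by simp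
    qed
    have fmx: "blinfun_apply (fm m) x = 0" if "m \<in> QQ xs" for m
    proof -
      have "fm m \<in> span Fs" using that unfolding Fs_def by (intro span_base) blast
      then show ?thesis using \<Psi>(3) x by metis
    qed
    have "blinfun_apply f x = \<epsilon>" using \<Psi>(4) x by metis
    then have xnz: "x \<noteq> 0" using \<open>\<epsilon> > 0\<close> by auto
    have close: "\<exists>y\<in>span (range xs). norm (x + y) < d" if "d > 0" for d
    proof (rule ccontr)
      assume "\<not> ?thesis"
      then have nd: "\<And>y. y \<in> span (range xs) \<Longrightarrow> d \<le> norm (x + y)" by force
      have cond2: "t * d \<le> norm (y + t *\<^sub>R x)" if "y \<in> span (range xs)" for y t
      proof (cases "t > 0")
        case False
        then have "t * d \<le> 0" using \<open>d > 0\<close> by (simp add: mult_nonpos_nonneg)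
        then show ?thesis by (meson norm_ge_zero order_trans)
      next
        case True
        have "y + t *\<^sub>R x = t *\<^sub>R (x + (1/t) *\<^sub>R y)" using True by (simp add: algebra_simps)
        then have "norm (y + t *\<^sub>R x) = t * norm (x + (1/t) *\<^sub>R y)" using True by simp
        moreover have "d \<le> norm (x + (1/t) *\<^sub>R y)" using nd span_scale[OF that] by blast
        ultimately show ?thesis using True by simp
      qed
      from HB_norm[OF subspace_span cond2] obtain g :: "'x \<Rightarrow>\<^sub>L real" where
        g: "\<forall>y\<in>span (range xs). blinfun_apply g y = 0" "blinfun_apply g x = d" by blast
      have "qn xs g \<le> 0"
        by (rule qn_least) (use g(1) span_base[of _ "range xs"] in auto)
      then show False using absx[of g] g(2) \<open>d > 0\<close> by simp
    qed
    define nx where "nx = norm x"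
    have nx: "nx > 0" using xnz unfolding nx_def by simp
    obtain y where y: "y \<in> span (range xs)" "norm (x + y) < nx/6" using close[of "nx/6"] nx by auto
    obtain m where m: "m \<in> QQ xs" "norm (-y - m) < nx/6"
      using QQ_dense[OF span_neg[OF y(1)], of "nx/6"] nx by auto
    have "x - m = (x + y) + (-y - m)" by simp
    then have "norm (x - m) \<le> norm (x + y) + norm (-y - m)" by (metis norm_triangle_ineq)
    then have xm: "norm (x - m) < nx/3" using y m by simp
    have "norm m = blinfun_apply (fm m) m - blinfun_apply (fm m) x" using fm2 fmx[OF m(1)] by simp
    also have "\<dots> = blinfun_apply (fm m) (m - x)" by (simp add: blinfun.diff_right)
    also have "\<dots> \<le> norm (m - x)" using fm1[of m "m - x"] by simp
    also have "\<dots> = norm (x - m)" by (rule norm_minus_commute)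
    finally have "norm m < nx/3" using xm by simp
    moreover have "nx \<le> norm m + norm (x - m)" unfolding nx_def by (metis add_diff_cancel_left' diff_add_cancel norm_triangle_ineq)
    ultimately show False using xm nx by simp
  qed
  have allV: "f \<in> V" for f
    unfolding V_def
  proof (intro CollectI, subst Cauchy_convergent_iff[symmetric], rule CauchyI)
    fix \<epsilon> :: real assume "\<epsilon> > 0"
    then obtain h where h: "h \<in> span Fs" "qn xs (f - h) < \<epsilon>/3" using approx[of "\<epsilon>/3"] by auto
    have "convergent (\<lambda>k. blinfun_apply h (xs (r k)))" using h(1) spanV unfolding V_def by blast
    then have "Cauchy (\<lambda>k. blinfun_apply h (xs (r k)))" by (simp add: Cauchy_convergent_iff)
    from CauchyD[OF this, of "\<epsilon>/3"] \<open>\<epsilon> > 0\<close> obtain M where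
      M: "\<And>m n. m \<ge> M \<Longrightarrow> n \<ge> M \<Longrightarrow> norm (blinfun_apply h (xs (r m)) - blinfun_apply h (xs (r n))) < \<epsilon>/3"
      by auto
    show "\<exists>M. \<forall>m\<ge>M. \<forall>n\<ge>M. norm (blinfun_apply f (xs (r m)) - blinfun_apply f (xs (r n))) < \<epsilon>"
    proof (intro exI allI impI)
      fix m n assume mn: "m \<ge> M" "n \<ge> M"
      have a: "\<bar>blinfun_apply f (xs (r k)) - blinfun_apply h (xs (r k))\<bar> < \<epsilon>/3" for k
        using qn_ub[OF B, of "f - h" "r k"] h(2) by (simp add: minus_blinfun.rep_eq)
      show "norm (blinfun_apply f (xs (r m)) - blinfun_apply f (xs (r n))) < \<epsilon>"
        using a[of m] a[of n] M[OF mn] by simp (smt (verit))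
    qed
  qed
  define \<Phi> where "\<Phi> f = lim (\<lambda>k. blinfun_apply f (xs (r k)))" for f :: "'x \<Rightarrow>\<^sub>L real"
  have \<Phi>lim: "(\<lambda>k. blinfun_apply f (xs (r k))) \<longlonglongrightarrow> \<Phi> f" for f
    using allV[of f] unfolding V_def \<Phi>_def by (simp add: convergent_LIMSEQ_iff)
  have "bounded_linear \<Phi>"
  proof (rule bounded_linear_intro[where K=B])
    fix f g
    have "(\<lambda>k. blinfun_apply (f + g) (xs (r k))) \<longlonglongrightarrow> \<Phi> f + \<Phi> g"
      using tendsto_add[OF \<Phi>lim[of f] \<Phi>lim[of g]] by (simp add: plus_blinfun.rep_eq)
    then show "\<Phi> (f + g) = \<Phi> f + \<Phi> g" using \<Phi>lim[of "f+g"] LIMSEQ_unique by blast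
  next
    fix c :: real and f
    have "(\<lambda>k. blinfun_apply (c *\<^sub>R f) (xs (r k))) \<longlonglongrightarrow> c * \<Phi> f"
      using tendsto_mult[OF tendsto_const[of c] \<Phi>lim[of f]] by (simp add: scaleR_blinfun.rep_eq)
    then show "\<Phi> (c *\<^sub>R f) = c *\<^sub>R \<Phi> f" using \<Phi>lim[of "c *\<^sub>R f"] LIMSEQ_unique by fastforce
  next
    fix f
    have "\<bar>\<Phi> f\<bar> \<le> norm f * B"
      using tendsto_upperbound[OF tendsto_rabs[OF \<Phi>lim[of f]], of "norm f * B"] bnd
      by (simp add: trivial_limit_sequentially)
    then show "norm (\<Phi> f) \<le> norm f * B" by simp
  qed
  from refl[unfolded reflexive_space_def, rule_format, of "Blinfun \<Phi>"]
  obtain x where x: "\<And>f. \<Phi> f = blinfun_apply f x"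
    using bounded_linear_Blinfun_apply[OF \<open>bounded_linear \<Phi>\<close>] by auto
  have "weakly_convergent_to (xs \<circ> r) x"
    unfolding weakly_convergent_to_def using \<Phi>lim x by (simp add: o_def)
  then show ?thesis using r_mono by blast
qed




lemma lsc_event:
  assumes "ereal a \<le> liminf (\<lambda>n. ereal (f n))" "\<epsilon> > 0"
  shows "eventually (\<lambda>n. a - \<epsilon> < f n) sequentially"
proof -
  have "ereal (a - \<epsilon>) < ereal a" using assms(2) by simp
  then have "ereal (a - \<epsilon>) < liminf (\<lambda>n. ereal (f n))" using assms(1) by (rule order_less_le_trans)
  from less_LiminfD[OF this] show ?thesis by simp
qed

lemma norm_imp_weak:
  fixes xs :: "nat \<Rightarrow> 'a::real_normed_vector"
  assumes "xs \<longlonglongrightarrow> l"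
  shows "weakly_convergent_to xs l"
  unfolding weakly_convergent_to_def
  using bounded_linear.tendsto[OF blinfun.bounded_linear_right assms] by blast

lemma lsc_closed:
  fixes R :: "'a::real_normed_vector \<Rightarrow> real"
  assumes "weakly_seq_lsc R"
  shows "closed {x. R x \<le> c}"
  unfolding closed_sequential_limits
proof (intro allI impI)
  fix xs l assume h: "(\<forall>n. xs n \<in> {x. R x \<le> c}) \<and> xs \<longlonglongrightarrow> l"
  show "l \<in> {x. R x \<le> c}"
  proof (rule ccontr)
    assume "l \<notin> {x. R x \<le> c}"
    then have gt: "R l > c" by simp
    have "ereal (R l) \<le> liminf (\<lambda>n. ereal (R (xs n)))"
      using assms norm_imp_weak[of xs l] h unfolding weakly_seq_lsc_def by blast
    from lsc_event[OF this, of "(R l - c)/2"] gt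
    have "eventually (\<lambda>n. R l - (R l - c)/2 < R (xs n)) sequentially" by simp
    then obtain N where "\<And>n. n \<ge> N \<Longrightarrow> R l - (R l - c)/2 < R (xs n)"
      unfolding eventually_sequentially by blast
    then have "R l - (R l - c)/2 < R (xs N)" by simp
    moreover have "R (xs N) \<le> c" using h by simp
    moreover have "R l - (R l - c)/2 = (R l + c)/2" by (simp add: field_simps)
    ultimately show False using gt by (simp add: field_simps)
  qed
qed

lemma baire_ball:
  fixes R :: "'x::banach \<Rightarrow> real"
  assumes cl: "\<And>c. closed {x. R x \<le> c}"
  shows "\<exists>x0 \<rho> K. \<rho> > 0 \<and> (\<forall>x\<in>ball x0 \<rho>. R x \<le> K)"
proof (rule ccontr)
  assume nb: "\<not> ?thesis"
  define G where "G = range (\<lambda>k::nat. {x. R x \<le> real k})"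
  have "euclidean interior_of \<Union>G = {}"
  proof (rule Baire_category_alt)
    show "completely_metrizable_space (euclidean :: 'x topology) \<or> locally_compact_space (euclidean :: 'x topology) \<and> regular_space (euclidean :: 'x topology)"
      using completely_metrizable_space_euclidean by blast
    show "countable G" unfolding G_def by simp
    fix T assume "T \<in> G"
    then obtain k where T: "T = {x. R x \<le> real k}" unfolding G_def by blast
    have "interior T = {}"
    proof (rule ccontr)
      assume "interior T \<noteq> {}"
      then obtain y where "y \<in> interior T" by blast
      then obtain e where "e > 0" "ball y e \<subseteq> T" using mem_interior by blast
      then show False using nb T by blast
    qed
    then show "closedin euclidean T \<and> euclidean interior_of T = {}"
      using cl T by simp
  qed
  moreover have "\<Union>G = UNIV"
  proof -
    have "x \<in> \<Union>G" for x
    proof -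
      obtain k :: nat where "R x \<le> real k" using real_arch_simple by blast
      then show ?thesis unfolding G_def by blast
    qed
    then show ?thesis by blast
  qed
  ultimately show False by simp
qed

lemma convex_lb:
  fixes g :: "'x::real_normed_vector \<Rightarrow> real"
  assumes cv: "convex_on UNIV g" and \<rho>: "\<rho> > 0" and K: "\<forall>x\<in>ball x0 \<rho>. g x \<le> K"
  shows "\<exists>C0 C1. \<forall>x. g x \<ge> - C0 - C1 * norm x"
proof -
  have near: "g x \<ge> 2 * g x0 - K" if "x \<in> ball x0 \<rho>" for x
  proof -
    have "g ((1 - 1/2) *\<^sub>R x + (1/2) *\<^sub>R (2 *\<^sub>R x0 - x)) \<le> (1 - 1/2) * g x + (1/2) * g (2 *\<^sub>R x0 - x)"
      by (rule convex_onD[OF cv]) auto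
    moreover have "(1 - 1/2) *\<^sub>R x + (1/2) *\<^sub>R (2 *\<^sub>R x0 - x) = x0" by (simp add: algebra_simps)
    moreover have "2 *\<^sub>R x0 - x \<in> ball x0 \<rho>"
    proof -
      have e: "x0 - (2 *\<^sub>R x0 - x) = x - x0" by (simp add: algebra_simps scaleR_2)
      have "dist x0 (2 *\<^sub>R x0 - x) = dist x0 x"
        unfolding dist_norm e by (rule norm_minus_commute)
      then show ?thesis using that by simp
    qed
    ultimately show ?thesis using K by fastforce
  qed
  define r where "r = \<rho>/2"
  have r: "r > 0" "r < \<rho>" using \<rho> r_def by auto
  define L where "L = K - g x0"
  have L: "L \<ge> 0" using K \<rho> unfolding L_def by simp
  have far: "g x \<ge> g x0 - L / r * norm (x - x0)" if "norm (x - x0) \<ge> r" for x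
  proof -
    define t where "t = r / norm (x - x0)"
    have npos: "norm (x - x0) > 0" using that r by linarith
    have t: "t > 0" "t \<le> 1" using npos that r unfolding t_def by (auto simp: field_simps)
    define w where "w = (1 - t) *\<^sub>R x0 + t *\<^sub>R x"
    have gw: "g w \<le> (1 - t) * g x0 + t * g x" unfolding w_def
      by (rule convex_onD[OF cv]) (use t in auto)
    have "w - x0 = t *\<^sub>R (x - x0)" unfolding w_def by (simp add: algebra_simps)
    then have "norm (w - x0) = t * norm (x - x0)" using t by simp
    also have "\<dots> = r" unfolding t_def using npos by simp
    finally have "w \<in> ball x0 \<rho>" using r by (simp add: dist_norm norm_minus_commute)
    then have "g w \<ge> g x0 - L" using near unfolding L_def by fastforce
    with gw have "t * g x \<ge> t * g x0 - L" by (simp add: algebra_simps)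
    then have "g x \<ge> g x0 - L / t" using t by (simp add: field_simps)
    moreover have "L / t = L / r * norm (x - x0)" unfolding t_def using npos r by (simp add: field_simps)
    ultimately show ?thesis by simp
  qed
  define C1 where "C1 = L / r"
  have C1: "C1 \<ge> 0" unfolding C1_def using L r by simp
  define C0 where "C0 = \<bar>2 * g x0 - K\<bar> + \<bar>g x0\<bar> + C1 * norm x0"
  have "g x \<ge> - C0 - C1 * norm x" for x
  proof (cases "norm (x - x0) \<ge> r")
    case True
    have "norm (x - x0) \<le> norm x + norm x0" by (rule norm_triangle_ineq4)
    then have "C1 * norm (x - x0) \<le> C1 * (norm x + norm x0)" using C1 by (rule mult_left_mono)
    then show ?thesis using far[OF True] unfolding C0_def C1_def[symmetric]
      by (simp add: algebra_simps)
  next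
    case False
    then have "x \<in> ball x0 \<rho>" using r by (simp add: dist_norm norm_minus_commute)
    from near[OF this] show ?thesis unfolding C0_def
      using C1 by (smt (verit) mult_nonneg_nonneg norm_ge_zero)
  qed
  then show ?thesis by blast
qed

lemma quad_bound:
  fixes \<mu> C0 C1 M t :: real
  assumes "\<mu> > 0" "C1 \<ge> 0" "t \<ge> 0" "\<mu>/2 * t^2 - C1 * t - C0 \<le> M"
  shows "t \<le> max 1 (2 * (C1 + \<bar>C0\<bar> + \<bar>M\<bar>) / \<mu>)"
proof (rule ccontr)
  define S where "S = C1 + \<bar>C0\<bar> + \<bar>M\<bar>"
  assume "\<not> ?thesis"
  then have t1: "t > 1" and t2: "t > 2 * S / \<mu>" unfolding S_def by auto
  have "\<mu> * t > 2 * S" using t2 assms(1) by (simp add: field_simps)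
  then have "(\<mu> * t) * t > (2 * S) * t" using t1 by (intro mult_strict_right_mono) auto
  then have a: "\<mu>/2 * t^2 > S * t" by (simp add: power2_eq_square algebra_simps)
  have "(\<bar>C0\<bar> + \<bar>M\<bar>) * t \<ge> (\<bar>C0\<bar> + \<bar>M\<bar>) * 1" using t1 by (intro mult_left_mono) auto
  then have "S * t \<ge> C1 * t + \<bar>C0\<bar> + \<bar>M\<bar>" unfolding S_def by (simp add: algebra_simps)
  with a assms(4) show False by linarith
qed




theorem mainTheorem2:
  fixes A :: "'x::banach \<Rightarrow> 'y::banach"
    and R Rwc Rsc :: "'x \<Rightarrow> real"
    and D :: "'y \<Rightarrow> 'y \<Rightarrow> real"
    and \<gamma> \<mu> :: real
  assumes A_lin: "bounded_linear A"
    and R_nonneg: "\<And>x. R x \<ge> 0"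
    and D_nonneg: "\<And>y1 y2. D y1 y2 \<ge> 0"
    and refl: "reflexive_space TYPE('x)"
    and R_lsc: "weakly_seq_lsc R"
    and R_split: "R = (\<lambda>x. Rwc x + Rsc x)"
    and Rwc_nonneg: "\<And>x. Rwc x \<ge> 0"
    and Rwc_wc: "weakly_convex \<gamma> Rwc"
    and Rsc_sc: "strongly_convex \<mu> Rsc"
    and gamma_mu: "\<gamma> \<le> \<mu> \<or>
        (\<mu> < \<gamma> \<and> \<gamma> < 2 * \<mu> \<and> weakly_seq_lsc (\<lambda>x. Rsc x - \<mu> / 2 * (norm x)\<^sup>2))"
    and D_lsc: "weakly_seq_lsc (\<lambda>(y1, y2). D y1 y2)"
    and D_convex: "\<And>y2. convex_on UNIV (\<lambda>y1. D y1 y2)"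
    and D_cont: "\<And>y1. continuous_on UNIV (\<lambda>y2. D y1 y2)"
    and D_zero: "\<And>y1 y2. D y1 y2 = 0 \<longleftrightarrow> y1 = y2"
    and D_tri: "\<exists>C>0. \<exists>p\<ge>1. \<forall>y1 y2 y3.
        D y1 y2 \<le> C * (D y1 y3 + norm (y2 - y3) powr p)"
  shows "\<forall>\<alpha>>0. \<forall>y\<delta>. \<exists>x. critical_point (\<lambda>x. \<alpha> * R x + D (A x) y\<delta>) x"
proof (intro allI impI)
  fix \<alpha> :: real and y\<delta> :: 'y
  assume \<alpha>: "\<alpha> > 0"
  define J where "J x = \<alpha> * R x + D (A x) y\<delta>" for x
  have \<mu>: "\<mu> > 0" and gcv: "convex_on UNIV (\<lambda>x. Rsc x - \<mu> / 2 * (norm x)\<^sup>2)"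
    using Rsc_sc unfolding strongly_convex_def rho_convex_def by auto
  have Rsc_le: "Rsc x \<le> R x" for x using Rwc_nonneg[of x] R_split by simp
  from baire_ball[OF lsc_closed[OF R_lsc]] obtain x0 \<rho> K where
    \<rho>: "\<rho> > 0" and K: "\<forall>x\<in>ball x0 \<rho>. R x \<le> K" by blast
  have "\<forall>x\<in>ball x0 \<rho>. Rsc x - \<mu> / 2 * (norm x)\<^sup>2 \<le> K"
  proof
    fix x assume "x \<in> ball x0 \<rho>"
    then have "R x \<le> K" using K by blast
    moreover have "\<mu> / 2 * (norm x)\<^sup>2 \<ge> 0" using \<mu> by simp
    ultimately show "Rsc x - \<mu> / 2 * (norm x)\<^sup>2 \<le> K" using Rsc_le[of x] by linarith
  qed
  from convex_lb[OF gcv \<rho> this] obtain C0 C1 where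
    C: "\<And>x. Rsc x - \<mu> / 2 * (norm x)\<^sup>2 \<ge> - C0 - C1 * norm x" by blast
  define C1' where "C1' = max C1 0"
  have C1'1: "C1' \<ge> 0" unfolding C1'_def by simp
  have C1'2: "Rsc x - \<mu> / 2 * (norm x)\<^sup>2 \<ge> - C0 - C1' * norm x" for x
  proof -
    have "C1 * norm x \<le> C1' * norm x" unfolding C1'_def by (intro mult_right_mono) auto
    then show ?thesis using C[of x] by linarith
  qed
  have J_nonneg: "J x \<ge> 0" for x unfolding J_def using R_nonneg[of x] D_nonneg[of "A x" y\<delta>] \<alpha> by simp
  have J_lb: "\<mu>/2 * (norm x)^2 - C1' * norm x - C0 \<le> J x / \<alpha>" for x
  proof -
    have "\<alpha> * R x \<le> J x" unfolding J_def using D_nonneg[of "A x" y\<delta>] by simp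
    then have "R x \<le> J x / \<alpha>" using \<alpha> by (simp add: field_simps)
    then show ?thesis using Rsc_le[of x] C1'2[of x] by linarith
  qed
  define m0 where "m0 = Inf (range J)"
  have bddJ: "bdd_below (range J)" using J_nonneg by (intro bdd_belowI[of _ 0]) auto
  have m0_le: "m0 \<le> J x" for x unfolding m0_def using bddJ by (intro cInf_lower) auto
  have "\<exists>x. J x < m0 + 1 / (real n + 1)" for n
  proof -
    have "Inf (range J) < m0 + 1 / (real n + 1)" unfolding m0_def by simp
    from cInf_lessD[OF _ this] show ?thesis by auto
  qed
  then have "\<forall>n. \<exists>x. J x < m0 + 1 / (real n + 1)" by blast
  from choice[OF this] obtain xs where xs: "\<And>n. J (xs n) < m0 + 1 / (real n + 1)" by blast
  define Bd where "Bd = max 1 (2 * (C1' + \<bar>C0\<bar> + \<bar>(J 0 + 1) / \<alpha>\<bar>) / \<mu>)"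
  have "norm (xs n) \<le> Bd" for n
  proof -
    have "1 / (real n + 1) \<le> 1" by simp
    then have "J (xs n) \<le> J 0 + 1" using xs[of n] m0_le[of 0] by linarith
    then have "J (xs n) / \<alpha> \<le> (J 0 + 1) / \<alpha>" using \<alpha> by (simp add: divide_right_mono)
    then have "\<mu>/2 * (norm (xs n))^2 - C1' * norm (xs n) - C0 \<le> (J 0 + 1) / \<alpha>"
      using J_lb[of "xs n"] by linarith
    from quad_bound[OF \<mu> C1'1 norm_ge_zero this] show ?thesis unfolding Bd_def .
  qed
  then have "\<forall>n. norm (xs n) \<le> Bd" by blast
  from weak_compact[OF refl this] obtain r x where r: "strict_mono r" and wc: "weakly_convergent_to (xs \<circ> r) x"
    by blast
  have lsc1: "ereal (R x) \<le> liminf (\<lambda>k. ereal (R (xs (r k))))"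
    using R_lsc wc unfolding weakly_seq_lsc_def by (simp add: o_def)
  have wc2: "weakly_convergent_to (\<lambda>k. (A (xs (r k)), y\<delta>)) (A x, y\<delta>)"
    unfolding weakly_convergent_to_def
  proof
    fix f :: "('y \<times> 'y) \<Rightarrow>\<^sub>L real"
    have bl: "bounded_linear (\<lambda>u. blinfun_apply f (A u, 0))"
      using bounded_linear_compose[OF blinfun.bounded_linear_right bounded_linear_Pair[OF A_lin bounded_linear_zero]] .
    have split: "blinfun_apply f (a, y\<delta>) = blinfun_apply f (a, 0) + blinfun_apply f (0, y\<delta>)" for a
      using blinfun.add_right[of f "(a, 0)" "(0, y\<delta>)"] by (simp del: blinfun.add_right)
    have "(\<lambda>k. blinfun_apply (Blinfun (\<lambda>u. blinfun_apply f (A u, 0))) ((xs \<circ> r) k)) \<longlonglongrightarrow>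
        blinfun_apply (Blinfun (\<lambda>u. blinfun_apply f (A u, 0))) x"
      using wc unfolding weakly_convergent_to_def by blast
    then have "(\<lambda>k. blinfun_apply f (A (xs (r k)), 0)) \<longlonglongrightarrow> blinfun_apply f (A x, 0)"
      using bounded_linear_Blinfun_apply[OF bl] by (simp add: o_def)
    from tendsto_add[OF this tendsto_const[of "blinfun_apply f (0, y\<delta>)"]]
    have "(\<lambda>k. blinfun_apply f (A (xs (r k)), 0) + blinfun_apply f (0, y\<delta>)) \<longlonglongrightarrow> blinfun_apply f (A x, 0) + blinfun_apply f (0, y\<delta>)" .
    moreover have "(\<lambda>k. blinfun_apply f (A (xs (r k)), 0) + blinfun_apply f (0, y\<delta>)) = (\<lambda>k. blinfun_apply f (A (xs (r k)), y\<delta>))"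
      by (rule ext) (rule split[symmetric])
    moreover have "blinfun_apply f (A x, 0) + blinfun_apply f (0, y\<delta>) = blinfun_apply f (A x, y\<delta>)"
      by (rule split[symmetric])
    ultimately show "(\<lambda>k. blinfun_apply f (A (xs (r k)), y\<delta>)) \<longlonglongrightarrow> blinfun_apply f (A x, y\<delta>)"
      by simp
  qed
  have lsc2: "ereal (D (A x) y\<delta>) \<le> liminf (\<lambda>k. ereal (D (A (xs (r k))) y\<delta>))"
    using D_lsc wc2 unfolding weakly_seq_lsc_def by fastforce
  have "J x \<le> m0"
  proof (rule field_le_epsilon)
    fix \<epsilon> :: real assume \<epsilon>: "\<epsilon> > 0"
    define \<eta> where "\<eta> = \<epsilon> / (\<alpha> + 2)"
    have \<eta>: "\<eta> > 0" unfolding \<eta>_def using \<epsilon> \<alpha> by simp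
    have "eventually (\<lambda>k. R x - \<eta> < R (xs (r k)) \<and> D (A x) y\<delta> - \<eta> < D (A (xs (r k))) y\<delta>) sequentially"
      using lsc_event[OF lsc1 \<eta>] lsc_event[OF lsc2 \<eta>] by (rule eventually_conj)
    then obtain N where N: "\<And>k. k \<ge> N \<Longrightarrow> R x - \<eta> < R (xs (r k)) \<and> D (A x) y\<delta> - \<eta> < D (A (xs (r k))) y\<delta>"
      unfolding eventually_sequentially by blast
    obtain N2 :: nat where N2: "inverse (real (Suc N2)) < \<eta>" using reals_Archimedean[OF \<eta>] by blast
    define k where "k = max N N2"
    have k: "R x - \<eta> < R (xs (r k))" "D (A x) y\<delta> - \<eta> < D (A (xs (r k))) y\<delta>" using N[of k] unfolding k_def by auto
    have "real N2 \<le> real (r k)" using seq_suble[OF r, of k] unfolding k_def by simp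
    then have "1 / (real (r k) + 1) \<le> inverse (real (Suc N2))"
      by (simp add: field_simps)
    then have Jk: "J (xs (r k)) < m0 + \<eta>" using xs[of "r k"] N2 by linarith
    have "\<alpha> * (R x - \<eta>) \<le> \<alpha> * R (xs (r k))" using k(1) \<alpha> by simp
    then have "J x - \<alpha> * \<eta> - \<eta> < J (xs (r k))" unfolding J_def using k(2) by (simp add: algebra_simps)
    with Jk have "J x < m0 + (\<alpha> + 2) * \<eta>" by (simp add: algebra_simps)
    also have "(\<alpha> + 2) * \<eta> = \<epsilon>" unfolding \<eta>_def using \<alpha> by simp
    finally show "J x \<le> m0 + \<epsilon>" by simp
  qed
  have "critical_point J x"
    unfolding critical_point_def frechet_subdiff_def
  proof (intro CollectI allI impI always_eventually)
    fix \<epsilon> :: real and x' assume "\<epsilon> > 0"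
    have "J x \<le> J x'" using \<open>J x \<le> m0\<close> m0_le[of x'] by linarith
    then show "J x + blinfun_apply 0 (x' - x) - \<epsilon> * norm (x' - x) \<le> J x'"
    proof -
      have "\<epsilon> * norm (x' - x) \<ge> 0" using \<open>\<epsilon> > 0\<close> by simp
      then show ?thesis using \<open>J x \<le> J x'\<close> by simp
    qed
  qed
  then show "\<exists>x. critical_point (\<lambda>x. \<alpha> * R x + D (A x) y\<delta>) x"
    unfolding J_def by blast
qed



end
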